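(* Let $\mathcal{S}$ be an abstract numeration system built on a tree language with a purely periodic labeled signature. The set of $\mathcal{S}$-automatic sequences is stable under finite modifications: if $\mathbf{x}$ is $\mathcal{S}$-automatic and $\mathbf{y}$ is an infinite word over a finite alphabet that differs from $\mathbf{x}$ in only finitely many positions, then $\mathbf{y}$ is $\mathcal{S}$-automatic.
   Context: An abstract numeration system is a triple $\mathcal{S}=(L,C,<)$ with $L$ an infinite language over a totally ordered finite alphabet $C$; $\mathrm{rep}_{\mathcal{S}}(n)$ is the $(n+1)$st word of $L$ in radix order (shorter first, then lexicographic). $\mathbf{x}$ over $B$ is $\mathcal{S}$-automatic if there is a deterministic finite automaton with output $(Q,q_0,C,\delta,\mu:Q\to B)$ with $x_n=\mu(\delta(q_0,\mathrm{rep}_{\mathcal{S}}(n)))$ for all $n$. A purely periodic labeled signature over $C$ (smallest letter $0$) is a sequence $(s_n)_{n\ge0}$ with $s_n=w_{n\bmod r}$, each $w_i$ having strictly increasing letters and $w_0=0y$ with $y$ non-empty. It generates an infinite labeled tree: nodes $v_0,v_1,\ldots$ are created in breadth-first order; $v_0$ is the root; the children of $v_n$ are reached by edges labeled by the letters of $s_n$ in increasing order, new children receiving the next unused indices; for the root, the edge labeled $0$ is a loop to $v_0$ and the other letters of $s_0$ lead to $v_1,\ldots,v_{|s_0|-1}$. The tree language $L(\mathsf{s})$ is the set of labels of paths from the root not starting with $0$; $\mathcal{S}=(L(\mathsf{s}),C,<)$. *)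

theory Defs
  imports Main
begin

definition radix_less :: "'c::linorder list \<Rightarrow> 'c list \<Rightarrow> bool" where
  "radix_less v w \<longleftrightarrow> length v < length w \<or>
     (length v = length w \<and> (v, w) \<in> lexord {(a, b). a < b})"

definition is_ANS :: "'c::linorder list set \<Rightarrow> 'c set \<Rightarrow> bool" where
  "is_ANS L C \<longleftrightarrow> finite C \<and> infinite L \<and> L \<subseteq> lists C"

definition rep_ANS :: "'c::linorder list set \<Rightarrow> nat \<Rightarrow> 'c list" where
  "rep_ANS L n = (THE w. w \<in> L \<and> card {v \<in> L. radix_less v w} = n)"

definition automatic :: "'c::linorder list set \<Rightarrow> 'c set \<Rightarrow> (nat \<Rightarrow> 'b) \<Rightarrow> bool" where
  "automatic L C x \<longleftrightarrow>
     (\<exists>(Q :: nat set) q0 (\<delta> :: nat \<Rightarrow> 'c \<Rightarrow> nat) (\<mu> :: nat \<Rightarrow> 'b).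
        finite Q \<and> q0 \<in> Q \<and> (\<forall>q\<in>Q. \<forall>a\<in>C. \<delta> q a \<in> Q) \<and>
        (\<forall>n. x n = \<mu> (foldl \<delta> q0 (rep_ANS L n))))"

text \<open>A purely periodic labeled signature over C is given by its period
  ws = [w_0, ..., w_{r-1}] (r \<ge> 1): s_n = w_{n mod r}; every w_i has strictly increasing
  letters from C, and w_0 = 0 y with 0 = Min C the smallest letter and y non-empty.\<close>
definition periodic_signature :: "'c::linorder set \<Rightarrow> 'c list list \<Rightarrow> bool" where
  "periodic_signature C ws \<longleftrightarrow> finite C \<and> C \<noteq> {} \<and> ws \<noteq> [] \<and>
     (\<forall>w\<in>set ws. sorted_wrt (<) w \<and> set w \<subseteq> C) \<and>
     (\<exists>y. y \<noteq> [] \<and> hd ws = Min C # y)"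

definition sig :: "'c list list \<Rightarrow> nat \<Rightarrow> 'c list" where
  "sig ws n = ws ! (n mod length ws)"

text \<open>Children of v_n receive the indices S(n), S(n)+1, ... with S(n) = sum of |s_m|, m<n
  (breadth-first numbering; for the root, the child at position 0 is v_0 itself: the loop).\<close>
definition first_child :: "'c list list \<Rightarrow> nat \<Rightarrow> nat" where
  "first_child ws n = (\<Sum>m<n. length (sig ws m))"

definition tree_step :: "'c list list \<Rightarrow> nat option \<Rightarrow> 'c \<Rightarrow> nat option" where
  "tree_step ws p a = (case p of None \<Rightarrow> None
     | Some n \<Rightarrow> (if a \<in> set (sig ws n)
                  then Some (first_child ws n + (LEAST j. sig ws n ! j = a)) else None))"

definition tree_language :: "'c::linorder set \<Rightarrow> 'c list list \<Rightarrow> 'c list set" where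
  "tree_language C ws = {w. foldl (tree_step ws) (Some 0) w \<noteq> None \<and>
                            (w = [] \<or> hd w \<noteq> Min C)}"

end

theory Submission imports Defs begin

lemma rl_irrefl: "\<not> radix_less (v::'c::linorder list) v"
proof -
  have "(v, v) \<notin> lexord {(a::'c, b). a < b}"
    by (rule lexord_irreflexive) simp
  thus ?thesis unfolding radix_less_def by simp
qed

lemma rl_trans: "radix_less (u::'c::linorder list) v \<Longrightarrow> radix_less v w \<Longrightarrow> radix_less u w"
proof -
  assume h1: "radix_less u v" and h2: "radix_less v w"
  have tr: "trans {(a::'c, b). a < b}" by (rule transI) simp
  have l1: "length u \<le> length v" and l2: "length v \<le> length w"
    using h1 h2 unfolding radix_less_def by linarith+
  show ?thesis
  proof (cases "length u < length w")
    case True thus ?thesis unfolding radix_less_def by simp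
  next
    case False
    hence e: "length u = length v" "length v = length w" using l1 l2 by linarith+
    hence "(u, v) \<in> lexord {(a::'c, b). a < b}" "(v, w) \<in> lexord {(a::'c, b). a < b}"
      using h1 h2 unfolding radix_less_def by auto
    hence "(u, w) \<in> lexord {(a::'c, b). a < b}" using lexord_trans tr by blast
    thus ?thesis using e unfolding radix_less_def by simp
  qed
qed
lemma rl_total: "(v::'c::linorder list) \<noteq> w \<Longrightarrow> radix_less v w \<or> radix_less w v"
proof -
  assume "v \<noteq> w"
  have "total {(a::'c, b). a < b}" by (auto simp: total_on_def)
  hence "total (lexord {(a::'c, b). a < b})" by (rule total_lexord)
  hence "(v, w) \<in> lexord {(a::'c, b). a < b} \<or> (w, v) \<in> lexord {(a::'c, b). a < b}"
    using \<open>v \<noteq> w\<close> unfolding total_on_def by blast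
  thus ?thesis unfolding radix_less_def by linarith
qed

lemma rep_props:
  assumes "is_ANS L C"
  shows "rep_ANS L n \<in> L \<and> card {v \<in> L. radix_less v (rep_ANS L n)} = n"
proof -
  define f where "f w = card {v \<in> L. radix_less v w}" for w
  have fin: "finite {v \<in> L. radix_less v w}" for w
  proof -
    have LC: "L \<subseteq> lists C" using assms unfolding is_ANS_def by blast
    have len: "radix_less v w \<Longrightarrow> length v \<le> length w" for v
      unfolding radix_less_def by linarith
    have "{v \<in> L. radix_less v w} \<subseteq> {xs. set xs \<subseteq> C \<and> length xs \<le> length w}"
      using LC len by blast
    moreover have "finite {xs. set xs \<subseteq> C \<and> length xs \<le> length w}"
      using assms finite_lists_length_le unfolding is_ANS_def by blast
    ultimately show ?thesis by (rule finite_subset)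
  qed
  have mono: "f w1 < f w2" if "radix_less w1 w2" "w1 \<in> L" for w1 w2
  proof -
    have "{v \<in> L. radix_less v w1} \<subseteq> {v \<in> L. radix_less v w2}"
      using that rl_trans by blast
    moreover have "w1 \<in> {v \<in> L. radix_less v w2}" "w1 \<notin> {v \<in> L. radix_less v w1}"
      using that rl_irrefl by auto
    ultimately have "{v \<in> L. radix_less v w1} \<subset> {v \<in> L. radix_less v w2}" by blast
    thus ?thesis unfolding f_def using fin psubset_card_mono by blast
  qed
  have inj: "inj_on f L"
  proof (rule inj_onI)
    fix a b assume ab: "a \<in> L" "b \<in> L" "f a = f b"
    show "a = b"
    proof (rule ccontr)
      assume "a \<noteq> b"
      hence "radix_less a b \<or> radix_less b a" by (rule rl_total)
      thus False using mono[of a b] mono[of b a] ab by linarith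
    qed
  qed
  have down: "{..<f w} \<subseteq> f ` L" if "w \<in> L" for w
  proof -
    let ?S = "{v \<in> L. radix_less v w}"
    have sub: "f ` ?S \<subseteq> {..<f w}"
    proof
      fix z assume "z \<in> f ` ?S"
      then obtain v where v: "v \<in> ?S" "z = f v" by blast
      then have "f v < f w" using mono[of v w] by blast
      then show "z \<in> {..<f w}" using v by simp
    qed
    have "inj_on f ?S" by (rule inj_on_subset[OF inj]) blast
    hence "card (f ` ?S) = card ?S" by (rule card_image)
    also have "card ?S = f w" by (simp add: f_def)
    finally have "card (f ` ?S) = card {..<f w}" by simp
    hence "f ` ?S = {..<f w}"
      by (rule card_subset_eq[OF finite_lessThan sub])
    thus ?thesis using that by blast
  qed
  have "infinite (f ` L)" using inj assms unfolding is_ANS_def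
    using finite_imageD by blast
  then have "\<not> (\<forall>m\<in>f ` L. m \<le> n)" using finite_nat_set_iff_bounded_le by blast
  then obtain m where "m \<in> f ` L" "n < m" by (meson not_le)
  then obtain w where "w \<in> L" "n < f w" by auto
  then have "n \<in> f ` L" using down by blast
  then obtain w where w: "w \<in> L" "f w = n" by auto
  have "\<exists>!w. w \<in> L \<and> card {v \<in> L. radix_less v w} = n"
  proof (rule ex1I[of _ w])
    show "w \<in> L \<and> card {v \<in> L. radix_less v w} = n" using w f_def by simp
    fix u assume "u \<in> L \<and> card {v \<in> L. radix_less v u} = n"
    thus "u = w" using w inj unfolding f_def inj_on_def by simp
  qed
  from theI'[OF this] show ?thesis unfolding rep_ANS_def .
qed

theorem mainTheorem14:
  fixes C :: "'c::linorder set" and ws :: "'c list list" and x y :: "nat \<Rightarrow> 'b"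
  assumes "periodic_signature C ws"
    and "is_ANS (tree_language C ws) C"
    and "automatic (tree_language C ws) C x"
    and "finite {n. x n \<noteq> y n}"
  shows "automatic (tree_language C ws) C y"
proof -
  define L where "L = tree_language C ws"
  define rep where "rep = rep_ANS L"
  have ans: "is_ANS L C" using assms(2) L_def by simp
  have repL: "rep n \<in> L" for n using rep_props[OF ans] rep_def by blast
  have repinj: "rep n = rep m \<Longrightarrow> n = m" for n m
    using rep_props[OF ans, of n] rep_props[OF ans, of m] rep_def by metis
  have repC: "set (rep n) \<subseteq> C" for n using repL ans unfolding is_ANS_def by blast
  have finC: "finite C" using ans unfolding is_ANS_def by blast
  obtain Q q0 and \<delta> :: "nat \<Rightarrow> 'c \<Rightarrow> nat" and \<mu> :: "nat \<Rightarrow> 'b" where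
    Q: "finite Q" "q0 \<in> Q" "\<forall>q\<in>Q. \<forall>a\<in>C. \<delta> q a \<in> Q"
    and xr: "\<forall>n. x n = \<mu> (foldl \<delta> q0 (rep n))"
    using assms(3) unfolding automatic_def L_def rep_def by blast
  define D where "D = {n. x n \<noteq> y n}"
  have finD: "finite D" using assms(4) D_def by simp
  define K where "K = Max (insert 0 (length ` rep ` D))"
  have lenK: "n \<in> D \<Longrightarrow> length (rep n) \<le> K" for n
    unfolding K_def using finD by (intro Max_ge) auto
  define W where "W = {w. set w \<subseteq> C \<and> length w \<le> K}"
  have finW: "finite W" unfolding W_def using finC finite_lists_length_le by blast
  define A where "A = (Some ` W \<union> {None}) \<times> Q"
  have finA: "finite A" unfolding A_def using finW Q(1) by simp
  obtain g and N :: nat where g: "g ` A = {i. i < N}" "inj_on g A"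
    using finite_imp_inj_to_nat_seg[OF finA] by blast
  define tr where "tr u = (if length u \<le> K then Some u else None)" for u :: "'c list"
  define stp where "stp p a = ((case fst p of None \<Rightarrow> None
     | Some w \<Rightarrow> if length w < K then Some (w @ [a]) else None), \<delta> (snd p) a)"
    for p :: "'c list option \<times> nat" and a
  define \<delta>' where "\<delta>' s a = g (stp (inv_into A g s) a)" for s a
  define \<mu>' where "\<mu>' s = (case inv_into A g s of
      (Some w, q) \<Rightarrow> if \<exists>n\<in>D. rep n = w then y (SOME n. n \<in> D \<and> rep n = w) else \<mu> q
    | (None, q) \<Rightarrow> \<mu> q)" for s
  define q0' where "q0' = g (Some [], q0)"
  have stpA: "stp p a \<in> A" if "p \<in> A" "a \<in> C" for p a
    using that Q(3) unfolding A_def stp_def W_def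
    by (auto split: option.splits)
  have inv: "foldl \<delta>' q0' u = g (tr u, foldl \<delta> q0 u) \<and> (tr u, foldl \<delta> q0 u) \<in> A"
    if "set u \<subseteq> C" for u
    using that
  proof (induction u rule: rev_induct)
    case Nil
    then show ?case unfolding q0'_def tr_def A_def W_def using Q(2) by auto
  next
    case (snoc a u)
    then have IH: "foldl \<delta>' q0' u = g (tr u, foldl \<delta> q0 u)" "(tr u, foldl \<delta> q0 u) \<in> A"
      and aC: "a \<in> C" by auto
    have e: "stp (tr u, foldl \<delta> q0 u) a = (tr (u @ [a]), foldl \<delta> q0 (u @ [a]))"
      unfolding stp_def tr_def by auto
    have "foldl \<delta>' q0' (u @ [a]) = \<delta>' (g (tr u, foldl \<delta> q0 u)) a" using IH(1) by simp
    also have "\<dots> = g (stp (tr u, foldl \<delta> q0 u) a)"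
      unfolding \<delta>'_def using inv_into_f_f[OF g(2) IH(2)] by simp
    finally show ?case using stpA[OF IH(2) aC] unfolding e by simp
  qed
  show ?thesis
    unfolding automatic_def
  proof (intro exI conjI)
    show "finite (g ` A)" using finA by simp
    show "q0' \<in> g ` A" using inv[of "[]"] by simp
    show "\<forall>q\<in>g ` A. \<forall>a\<in>C. \<delta>' q a \<in> g ` A"
      using stpA by (auto simp: \<delta>'_def inv_into_f_f[OF g(2)])
    show "\<forall>n. y n = \<mu>' (foldl \<delta>' q0' (rep_ANS (tree_language C ws) n))"
    proof
      fix n
      have u: "rep_ANS (tree_language C ws) n = rep n" using L_def rep_def by simp
      have I: "foldl \<delta>' q0' (rep n) = g (tr (rep n), foldl \<delta> q0 (rep n))"
        "(tr (rep n), foldl \<delta> q0 (rep n)) \<in> A" using inv[OF repC] by auto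
      have M: "\<mu>' (foldl \<delta>' q0' (rep n)) = (case (tr (rep n), foldl \<delta> q0 (rep n)) of
      (Some w, q) \<Rightarrow> if \<exists>n\<in>D. rep n = w then y (SOME n. n \<in> D \<and> rep n = w) else \<mu> q
    | (None, q) \<Rightarrow> \<mu> q)"
        unfolding I(1) \<mu>'_def inv_into_f_f[OF g(2) I(2)] by simp
      show "y n = \<mu>' (foldl \<delta>' q0' (rep_ANS (tree_language C ws) n))"
      proof (cases "n \<in> D")
        case True
        then have t: "tr (rep n) = Some (rep n)" using lenK tr_def by simp
        have "(SOME m. m \<in> D \<and> rep m = rep n) = n"
          using True repinj by (intro some_equality) auto
        then show ?thesis unfolding u M t using True by auto
      next
        case False
        then have "x n = y n" using D_def by simp
        moreover have "\<not> (\<exists>m\<in>D. rep m = rep n)" using False repinj by blast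
        ultimately show ?thesis unfolding u M using xr tr_def by auto
      qed
    qed
  qed
qed

end
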